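(* Let $\rho_{12},\rho_{23},\rho_{34},\rho_{45}\in\mathbb{F}\setminus\{\frac12\}$, and let $\mathbf{A}$ be the 5-dimensional LV algebra with natural basis $e_1,\dots,e_5$ in which $e_ie_{i+1}=\rho_{i,i+1}e_i+(1-\rho_{i,i+1})e_{i+1}$ for $i=1,2,3,4$, and $e_ie_j=\frac12(e_i+e_j)$ for all other pairs $i,j$ (i.e. for $\{i,j\}\in\{\{1,3\},\{1,4\},\{1,5\},\{2,4\},\{2,5\},\{3,5\}\}$ and $i=j$). Then $\mathrm{Der}(\mathbf{A})=\{0\}$.
   Context: Let $\mathbb{F}$ be a field of characteristic different from $2$. A Lotka–Volterra (LV) algebra of dimension $5$ over $\mathbb{F}$ is a commutative (not necessarily associative) $\mathbb{F}$-algebra $\mathbf{A}$ with a basis $e_1,\dots,e_5$ (the natural basis) such that $e_ie_j=\alpha_{ij}e_i+\alpha_{ji}e_j$ with $\alpha_{ij}\in\mathbb{F}$, $\alpha_{ii}=\frac12$ and $\alpha_{ij}+\alpha_{ji}=1$ for all $i,j$. A derivation is a linear map $D:\mathbf{A}\to\mathbf{A}$ with $D(uv)=D(u)v+uD(v)$ for all $u,v$; $\mathrm{Der}(\mathbf{A})$ is the set of derivations. *)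

theory Defs
  imports "HOL-Analysis.Analysis"
begin

text \<open>Index set of the natural basis e1,...,e5.\<close>
datatype idx = I1 | I2 | I3 | I4 | I5

lemma UNIV_idx: "(UNIV :: idx set) = {I1, I2, I3, I4, I5}"
  using idx.exhaust by auto

instance idx :: finite
  by standard (simp add: UNIV_idx)

text \<open>Basis vector e_i of F^5.\<close>
definition ebasis :: "idx \<Rightarrow> 'a::field ^ idx" where
  "ebasis i = (\<chi> k. if k = i then 1 else 0)"

text \<open>Lotka-Volterra structure constants: alpha_ii = 1/2 and alpha_ij + alpha_ji = 1.\<close>
definition is_LV_constants :: "(idx \<Rightarrow> idx \<Rightarrow> 'a::field) \<Rightarrow> bool" where
  "is_LV_constants \<alpha> \<longleftrightarrow> (\<forall>i. \<alpha> i i = 1/2) \<and> (\<forall>i j. \<alpha> i j + \<alpha> j i = 1)"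

text \<open>Bilinear extension of e_i e_j = alpha_ij e_i + alpha_ji e_j:
  the k-th coordinate of u v is sum_j alpha_kj (u_k v_j + u_j v_k).\<close>
definition lv_mult :: "(idx \<Rightarrow> idx \<Rightarrow> 'a::field) \<Rightarrow> 'a ^ idx \<Rightarrow> 'a ^ idx \<Rightarrow> 'a ^ idx" where
  "lv_mult \<alpha> u v = (\<chi> k. \<Sum>j\<in>UNIV. \<alpha> k j * (u $ k * v $ j + u $ j * v $ k))"

text \<open>Structure constants of the chain algebra of the theorem.\<close>
definition chain_alpha :: "'a::field \<Rightarrow> 'a \<Rightarrow> 'a \<Rightarrow> 'a \<Rightarrow> idx \<Rightarrow> idx \<Rightarrow> 'a" where
  "chain_alpha r12 r23 r34 r45 i j =
     (if (i, j) = (I1, I2) then r12 else if (i, j) = (I2, I1) then 1 - r12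
      else if (i, j) = (I2, I3) then r23 else if (i, j) = (I3, I2) then 1 - r23
      else if (i, j) = (I3, I4) then r34 else if (i, j) = (I4, I3) then 1 - r34
      else if (i, j) = (I4, I5) then r45 else if (i, j) = (I5, I4) then 1 - r45
      else 1/2)"

text \<open>Derivations of the algebra (F^5, mult).\<close>
definition is_derivation :: "('a::field ^ idx \<Rightarrow> 'a ^ idx \<Rightarrow> 'a ^ idx) \<Rightarrow> ('a ^ idx \<Rightarrow> 'a ^ idx) \<Rightarrow> bool" where
  "is_derivation mul D \<longleftrightarrow>
     Vector_Spaces.linear ((*s)) ((*s)) D \<and>
     (\<forall>u v. D (mul u v) = mul (D u) v + mul u (D v))"

end

theory Submission
  imports Defs
begin

lemma mult_e:
  "lv_mult \<alpha> x (ebasis j) $ k = \<alpha> k j * x $ k + (if k = j then (\<Sum>l\<in>UNIV. \<alpha> j l * x $ l) else 0)"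
  by (cases j; cases k; simp add: lv_mult_def ebasis_def UNIV_idx algebra_simps)

lemma mult_e2:
  "lv_mult \<alpha> (ebasis i) y $ k = \<alpha> k i * y $ k + (if k = i then (\<Sum>l\<in>UNIV. \<alpha> i l * y $ l) else 0)"
  by (cases i; cases k; simp add: lv_mult_def ebasis_def UNIV_idx algebra_simps)

lemma mult_ee: "lv_mult \<alpha> (ebasis i) (ebasis j) = \<alpha> i j *s ebasis i + \<alpha> j i *s ebasis j"
  by (cases i; cases j; simp add: vec_eq_iff lv_mult_def ebasis_def UNIV_idx)

lemma der_eq:
  assumes "is_derivation (lv_mult \<alpha>) D"
  shows "\<alpha> i j * D (ebasis i) $ k + \<alpha> j i * D (ebasis j) $ k =
    \<alpha> k j * D (ebasis i) $ k + (if k = j then (\<Sum>l\<in>UNIV. \<alpha> j l * D (ebasis i) $ l) else 0)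
  + (\<alpha> k i * D (ebasis j) $ k + (if k = i then (\<Sum>l\<in>UNIV. \<alpha> i l * D (ebasis j) $ l) else 0))"
proof -
  have lin: "Vector_Spaces.linear ((*s)) ((*s)) D"
    and m: "\<And>u v. D (lv_mult \<alpha> u v) = lv_mult \<alpha> (D u) v + lv_mult \<alpha> u (D v)"
    using assms unfolding is_derivation_def by auto
  have mh: "module_hom ((*s)) ((*s)) D" using lin Vector_Spaces.module_hom_iff_linear by blast
  have "D (lv_mult \<alpha> (ebasis i) (ebasis j)) = \<alpha> i j *s D (ebasis i) + \<alpha> j i *s D (ebasis j)"
    unfolding mult_ee using module_hom.add[OF mh] module_hom.scale[OF mh] by simp
  then have "\<alpha> i j *s D (ebasis i) + \<alpha> j i *s D (ebasis j) =
     lv_mult \<alpha> (D (ebasis i)) (ebasis j) + lv_mult \<alpha> (ebasis i) (D (ebasis j))"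
    using m by simp
  then have "(\<alpha> i j *s D (ebasis i) + \<alpha> j i *s D (ebasis j)) $ k =
     (lv_mult \<alpha> (D (ebasis i)) (ebasis j) + lv_mult \<alpha> (ebasis i) (D (ebasis j))) $ k" by simp
  then show ?thesis by (simp only: vector_add_component vector_smult_component mult_e mult_e2)
qed

lemma ca_simps:
  "chain_alpha r12 r23 r34 r45 I1 I1 = 1/2"
  "chain_alpha r12 r23 r34 r45 I1 I2 = r12"
  "chain_alpha r12 r23 r34 r45 I1 I3 = 1/2"
  "chain_alpha r12 r23 r34 r45 I1 I4 = 1/2"
  "chain_alpha r12 r23 r34 r45 I1 I5 = 1/2"
  "chain_alpha r12 r23 r34 r45 I2 I1 = 1 - r12"
  "chain_alpha r12 r23 r34 r45 I2 I2 = 1/2"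
  "chain_alpha r12 r23 r34 r45 I2 I3 = r23"
  "chain_alpha r12 r23 r34 r45 I2 I4 = 1/2"
  "chain_alpha r12 r23 r34 r45 I2 I5 = 1/2"
  "chain_alpha r12 r23 r34 r45 I3 I1 = 1/2"
  "chain_alpha r12 r23 r34 r45 I3 I2 = 1 - r23"
  "chain_alpha r12 r23 r34 r45 I3 I3 = 1/2"
  "chain_alpha r12 r23 r34 r45 I3 I4 = r34"
  "chain_alpha r12 r23 r34 r45 I3 I5 = 1/2"
  "chain_alpha r12 r23 r34 r45 I4 I1 = 1/2"
  "chain_alpha r12 r23 r34 r45 I4 I2 = 1/2"
  "chain_alpha r12 r23 r34 r45 I4 I3 = 1 - r34"
  "chain_alpha r12 r23 r34 r45 I4 I4 = 1/2"
  "chain_alpha r12 r23 r34 r45 I4 I5 = r45"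
  "chain_alpha r12 r23 r34 r45 I5 I1 = 1/2"
  "chain_alpha r12 r23 r34 r45 I5 I2 = 1/2"
  "chain_alpha r12 r23 r34 r45 I5 I3 = 1/2"
  "chain_alpha r12 r23 r34 r45 I5 I4 = 1 - r45"
  "chain_alpha r12 r23 r34 r45 I5 I5 = 1/2"
  by (simp_all add: chain_alpha_def)

lemma idx_eqs:
  "(I1 = I1) = True"
  "(I1 = I2) = False"
  "(I1 = I3) = False"
  "(I1 = I4) = False"
  "(I1 = I5) = False"
  "(I2 = I1) = False"
  "(I2 = I2) = True"
  "(I2 = I3) = False"
  "(I2 = I4) = False"
  "(I2 = I5) = False"
  "(I3 = I1) = False"
  "(I3 = I2) = False"
  "(I3 = I3) = True"
  "(I3 = I4) = False"
  "(I3 = I5) = False"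
  "(I4 = I1) = False"
  "(I4 = I2) = False"
  "(I4 = I3) = False"
  "(I4 = I4) = True"
  "(I4 = I5) = False"
  "(I5 = I1) = False"
  "(I5 = I2) = False"
  "(I5 = I3) = False"
  "(I5 = I4) = False"
  "(I5 = I5) = True"
  by simp_all

lemma sum_idx: "(\<Sum>l\<in>UNIV. f l) = f I1 + f I2 + f I3 + f I4 + (f I5 :: 'a::comm_monoid_add)"
  by (simp add: UNIV_idx add.assoc)

lemma aux_cancel: "(a::'a::ab_group_add) + a = a + s + (a + s) \<Longrightarrow> s + s = 0"
proof -
  assume h: "a + a = a + s + (a + s)"
  have "a + a + (s + s) = a + a + 0" using h by (simp add: ac_simps)
  then show ?thesis by simp
qed

lemma nz_aux1:
  fixes r :: "'a::field"
  assumes "c \<noteq> 0" "r * 2 \<noteq> 1"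
  shows "r * (2 * c) \<noteq> c" "(2 * c) * r \<noteq> c"
proof -
  show "r * (2 * c) \<noteq> c"
  proof
    assume "r * (2 * c) = c"
    then have "(r * 2) * c = 1 * c" by (simp add: mult.assoc)
    then show False using assms by simp
  qed
  then show "(2 * c) * r \<noteq> c" by (simp add: mult.commute)
qed

lemma nz_aux:
  fixes r :: "'a::field"
  assumes two: "(2::'a) \<noteq> 0"
  shows "r \<noteq> 1/2 \<Longrightarrow> r * 4 \<noteq> 2 \<and> r * 8 \<noteq> 4 \<and> 4 * r \<noteq> 2 \<and> 8 * r \<noteq> 4 \<and> r * 16 \<noteq> 8 \<and> 16 * r \<noteq> 8"
proof -
  assume r: "r \<noteq> 1/2"
  have f: "(4::'a) \<noteq> 0" using two by (metis mult_2 mult_eq_0_iff numeral_Bit0)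
  have f8: "(8::'a) \<noteq> 0" using f two by (metis mult_2 mult_eq_0_iff numeral_Bit0)
  have r2: "r * 2 \<noteq> 1" using r two by (auto simp: field_simps)
  note A = nz_aux1[OF two r2] nz_aux1[OF f r2] nz_aux1[OF f8 r2]
  have n: "2 * (2::'a) = 4" "2 * (4::'a) = 8" "2 * (8::'a) = 16" by simp_all
  show ?thesis using A unfolding n by blast
qed

lemma der_S:
  fixes \<alpha> :: "idx \<Rightarrow> idx \<Rightarrow> 'a::field"
  assumes "is_derivation (lv_mult \<alpha>) D" "(2::'a) \<noteq> 0" "\<alpha> i i = 1/2" "k \<noteq> i"
  shows "(2 * \<alpha> k i - 1) * D (ebasis i) $ k = 0"
proof -
  let ?x = "D (ebasis i) $ k"
  have h: "\<alpha> i i * ?x + \<alpha> i i * ?x = \<alpha> k i * ?x + \<alpha> k i * ?x"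
    using der_eq[OF assms(1), of i i k] assms(4) by simp
  have hh: "\<alpha> i i + \<alpha> i i = 1"
    unfolding mult_2[symmetric] assms(3) using assms(2) by simp
  have "(\<alpha> i i + \<alpha> i i) * ?x = (\<alpha> k i + \<alpha> k i) * ?x" using h by (simp only: distrib_right)
  then have "?x = 2 * \<alpha> k i * ?x" unfolding hh mult_1 mult_2 .
  then show ?thesis by (simp add: left_diff_distrib)
qed

lemma der_Sum:
  fixes \<alpha> :: "idx \<Rightarrow> idx \<Rightarrow> 'a::field"
  assumes "is_derivation (lv_mult \<alpha>) D" "(2::'a) \<noteq> 0" "\<alpha> i i = 1/2"
  shows "(\<Sum>l\<in>UNIV. \<alpha> i l * D (ebasis i) $ l) = 0"
proof -
  let ?S = "(\<Sum>l\<in>UNIV. \<alpha> i l * D (ebasis i) $ l)"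
  let ?a = "\<alpha> i i * D (ebasis i) $ i"
  have eq: "?a + ?a = ?a + ?S + (?a + ?S)" using der_eq[OF assms(1), of i i i] by simp
  have "?S + ?S = 0" using aux_cancel[OF eq] .
  then have "2 * ?S = 0" by (simp only: mult_2)
  then show ?thesis using assms(2) by simp
qed

lemma der_B:
  fixes \<alpha> :: "idx \<Rightarrow> idx \<Rightarrow> 'a::field"
  assumes "is_derivation (lv_mult \<alpha>) D" "(2::'a) \<noteq> 0" "\<alpha> j j = 1/2" "i \<noteq> j"
  shows "\<alpha> i j * D (ebasis i) $ j = D (ebasis i) $ j / 2 + (\<Sum>l\<in>UNIV. \<alpha> j l * D (ebasis i) $ l)"
  using der_eq[OF assms(1), of i j j] assms(2-4) by (simp add: field_simps)

lemma der_A: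
  assumes "is_derivation (lv_mult \<alpha>) D" "k \<noteq> i" "k \<noteq> j"
  shows "\<alpha> i j * D (ebasis i) $ k + \<alpha> j i * D (ebasis j) $ k = \<alpha> k j * D (ebasis i) $ k + \<alpha> k i * D (ebasis j) $ k"
  using der_eq[OF assms(1), of i j k] assms(2-3) by simp


lemma cols_zero:
  fixes r12 r23 r34 r45 :: "'a::field"
  assumes two: "(2::'a) \<noteq> 0"
    and "r12 \<noteq> 1/2" and "r23 \<noteq> 1/2" and "r34 \<noteq> 1/2" and "r45 \<noteq> 1/2"
    and der: "is_derivation (lv_mult (chain_alpha r12 r23 r34 r45)) D"
  shows "D (ebasis i) = 0"
proof -
  have aii: "chain_alpha r12 r23 r34 r45 j j = 1/2" for j by (cases j) (simp_all add: chain_alpha_def)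
  have nz: "r12 * 2 \<noteq> 1" "r23 * 2 \<noteq> 1" "r34 * 2 \<noteq> 1" "r45 * 2 \<noteq> 1"
     "2 * r12 \<noteq> 1" "2 * r23 \<noteq> 1" "2 * r34 \<noteq> 1" "2 * r45 \<noteq> 1"
    using assms by (auto simp: field_simps)
  have four: "(4::'a) \<noteq> 0" "(8::'a) \<noteq> 0" using two by (metis mult_2 mult_eq_0_iff numeral_Bit0 numeral_times_numeral)+
  have nz2: "r12 * 4 \<noteq> 2" "r12 * 8 \<noteq> 4" "4 * r12 \<noteq> 2" "8 * r12 \<noteq> 4" "r12 * 16 \<noteq> 8" "r23 * 4 \<noteq> 2" "r23 * 8 \<noteq> 4" "4 * r23 \<noteq> 2" "8 * r23 \<noteq> 4" "r23 * 16 \<noteq> 8" "r34 * 4 \<noteq> 2" "r34 * 8 \<noteq> 4" "4 * r34 \<noteq> 2" "8 * r34 \<noteq> 4" "r34 * 16 \<noteq> 8" "r45 * 4 \<noteq> 2" "r45 * 8 \<noteq> 4" "4 * r45 \<noteq> 2" "8 * r45 \<noteq> 4" "r45 * 16 \<noteq> 8"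
    using assms four nz_aux[OF two] by auto
  have x21: "D (ebasis I2) $ I1 = 0" using der_S[where i=I2 and k=I1, OF der two aii, simplified] 
    by (simp add: ca_simps sum_idx two four nz nz2 field_simps)
  have x23: "D (ebasis I2) $ I3 = 0" using der_S[where i=I2 and k=I3, OF der two aii, simplified] 
    by (simp add: ca_simps sum_idx two four nz nz2 field_simps)
  have sum2: "D (ebasis I2) $ I2 + D (ebasis I2) $ I4 + D (ebasis I2) $ I5 = 0" using der_Sum[where i=I2, OF der two aii] x21 x23
    by (simp add: ca_simps sum_idx two four nz nz2 field_simps)
  have sub2: "D (ebasis I2) $ I2 = - (D (ebasis I2) $ I4 + D (ebasis I2) $ I5)" using sum2
    by (simp only: eq_neg_iff_add_eq_0 add.assoc)
  have x24: "D (ebasis I2) $ I4 = 0" using der_B[where i=I2 and j=I5, OF der two aii, simplified] x21 x23 sub2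
    by (simp add: ca_simps sum_idx two four nz nz2 field_simps)
  have x25: "D (ebasis I2) $ I5 = 0" using der_B[where i=I2 and j=I4, OF der two aii, simplified] x21 x23 x24 sub2
    by (simp add: ca_simps sum_idx two four nz nz2 field_simps)
  have x22: "D (ebasis I2) $ I2 = 0" using sub2 x24 x25 by simp
  have x43: "D (ebasis I4) $ I3 = 0" using der_S[where i=I4 and k=I3, OF der two aii, simplified] 
    by (simp add: ca_simps sum_idx two four nz nz2 field_simps)
  have x45: "D (ebasis I4) $ I5 = 0" using der_S[where i=I4 and k=I5, OF der two aii, simplified] 
    by (simp add: ca_simps sum_idx two four nz nz2 field_simps)
  have sum4: "D (ebasis I4) $ I4 + D (ebasis I4) $ I1 + D (ebasis I4) $ I2 = 0" using der_Sum[where i=I4, OF der two aii] x43 x45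
    by (simp add: ca_simps sum_idx two four nz nz2 field_simps)
  have sub4: "D (ebasis I4) $ I4 = - (D (ebasis I4) $ I1 + D (ebasis I4) $ I2)" using sum4
    by (simp only: eq_neg_iff_add_eq_0 add.assoc)
  have x42: "D (ebasis I4) $ I2 = 0" using der_B[where i=I4 and j=I1, OF der two aii, simplified] x43 x45 sub4
    by (simp add: ca_simps sum_idx two four nz nz2 field_simps)
  have x41: "D (ebasis I4) $ I1 = 0" using der_B[where i=I4 and j=I2, OF der two aii, simplified] x42 x43 x45 sub4
    by (simp add: ca_simps sum_idx two four nz nz2 field_simps)
  have x44: "D (ebasis I4) $ I4 = 0" using sub4 x41 x42 by simp
  have x12: "D (ebasis I1) $ I2 = 0" using der_S[where i=I1 and k=I2, OF der two aii, simplified] 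
    by (simp add: ca_simps sum_idx two four nz nz2 field_simps)
  have sum1: "D (ebasis I1) $ I1 + D (ebasis I1) $ I3 + D (ebasis I1) $ I4 + D (ebasis I1) $ I5 = 0" using der_Sum[where i=I1, OF der two aii] x12
    by (simp add: ca_simps sum_idx two four nz nz2 field_simps)
  have sub1: "D (ebasis I1) $ I1 = - (D (ebasis I1) $ I3 + D (ebasis I1) $ I4 + D (ebasis I1) $ I5)" using sum1
    by (simp only: eq_neg_iff_add_eq_0 add.assoc)
  have x14: "D (ebasis I1) $ I4 = 0" using der_B[where i=I1 and j=I5, OF der two aii, simplified] x12 sub1
    by (simp add: ca_simps sum_idx two four nz nz2 field_simps)
  have x15: "D (ebasis I1) $ I5 = 0" using der_A[where i=I1 and j=I2 and k=I5, OF der, simplified] x25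
    by (simp add: ca_simps sum_idx two four nz nz2 field_simps)
  have x13: "D (ebasis I1) $ I3 = 0" using der_B[where i=I1 and j=I4, OF der two aii, simplified] x12 x14 x15 sub1
    by (simp add: ca_simps sum_idx two four nz nz2 field_simps)
  have x11: "D (ebasis I1) $ I1 = 0" using der_B[where i=I1 and j=I2, OF der two aii, simplified] x12 x13 x14 x15 sub1
    by (simp add: ca_simps sum_idx two four nz nz2 field_simps)
  have x54: "D (ebasis I5) $ I4 = 0" using der_S[where i=I5 and k=I4, OF der two aii, simplified] 
    by (simp add: ca_simps sum_idx two four nz nz2 field_simps)
  have sum5: "D (ebasis I5) $ I5 + D (ebasis I5) $ I1 + D (ebasis I5) $ I2 + D (ebasis I5) $ I3 = 0" using der_Sum[where i=I5, OF der two aii] x54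
    by (simp add: ca_simps sum_idx two four nz nz2 field_simps)
  have sub5: "D (ebasis I5) $ I5 = - (D (ebasis I5) $ I1 + D (ebasis I5) $ I2 + D (ebasis I5) $ I3)" using sum5
    by (simp only: eq_neg_iff_add_eq_0 add.assoc)
  have x52: "D (ebasis I5) $ I2 = 0" using der_B[where i=I5 and j=I1, OF der two aii, simplified] x54 sub5
    by (simp add: ca_simps sum_idx two four nz nz2 field_simps)
  have x51: "D (ebasis I5) $ I1 = 0" using der_A[where i=I5 and j=I4 and k=I1, OF der, simplified] x41
    by (simp add: ca_simps sum_idx two four nz nz2 field_simps)
  have x53: "D (ebasis I5) $ I3 = 0" using der_B[where i=I5 and j=I2, OF der two aii, simplified] x51 x52 x54 sub5
    by (simp add: ca_simps sum_idx two four nz nz2 field_simps)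
  have x55: "D (ebasis I5) $ I5 = 0" using sub5 x51 x52 x53 by simp
  have x32: "D (ebasis I3) $ I2 = 0" using der_S[where i=I3 and k=I2, OF der two aii, simplified] 
    by (simp add: ca_simps sum_idx two four nz nz2 field_simps)
  have x34: "D (ebasis I3) $ I4 = 0" using der_S[where i=I3 and k=I4, OF der two aii, simplified] 
    by (simp add: ca_simps sum_idx two four nz nz2 field_simps)
  have sum3: "D (ebasis I3) $ I1 + D (ebasis I3) $ I3 + D (ebasis I3) $ I5 = 0" using der_Sum[where i=I3, OF der two aii] x32 x34
    by (simp add: ca_simps sum_idx two four nz nz2 field_simps)
  have sub3: "D (ebasis I3) $ I1 = - (D (ebasis I3) $ I3 + D (ebasis I3) $ I5)" using sum3
    by (simp only: eq_neg_iff_add_eq_0 add.assoc)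
  have x35: "D (ebasis I3) $ I5 = 0" using der_A[where i=I3 and j=I2 and k=I5, OF der, simplified] x25
    by (simp add: ca_simps sum_idx two four nz nz2 field_simps)
  have x33: "D (ebasis I3) $ I3 = 0" using der_B[where i=I3 and j=I4, OF der two aii, simplified] x32 x34 x35 sub3
    by (simp add: ca_simps sum_idx two four nz nz2 field_simps)
  have x31: "D (ebasis I3) $ I1 = 0" using sub3 x33 x35 by simp
  have "\<forall>k. D (ebasis i) $ k = 0" using x11 x12 x13 x14 x15 x21 x22 x23 x24 x25 x31 x32 x33 x34 x35 x41 x42 x43 x44 x45 x51 x52 x53 x54 x55
    by (cases i; auto; case_tac k; simp)
  then show ?thesis by (simp add: vec_eq_iff)
qed

lemma zero_der: "is_derivation (lv_mult \<alpha>) (\<lambda>u. 0::'a::field^idx)"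
proof -
  have "module_hom ((*s)) ((*s)) (\<lambda>u. 0::'a^idx)"
    by (rule module_hom.intro, rule vec.module_axioms, rule vec.module_axioms)
       (unfold_locales, simp_all)
  then have "Vector_Spaces.linear ((*s)) ((*s)) (\<lambda>u. 0::'a^idx)"
    using Vector_Spaces.module_hom_iff_linear by blast
  moreover have "lv_mult \<alpha> 0 v = 0" "lv_mult \<alpha> v 0 = 0" for v :: "'a^idx"
    by (simp_all add: lv_mult_def vec_eq_iff)
  ultimately show ?thesis unfolding is_derivation_def by simp
qed

theorem mainTheorem14:
  fixes r12 r23 r34 r45 :: "'a::field"
  assumes "(2::'a) \<noteq> 0"
    and "r12 \<noteq> 1/2" and "r23 \<noteq> 1/2" and "r34 \<noteq> 1/2" and "r45 \<noteq> 1/2"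
  shows "{D. is_derivation (lv_mult (chain_alpha r12 r23 r34 r45)) D} = {(\<lambda>u. 0)}"
proof (rule set_eqI, simp, rule iffI)
  fix D :: "'a^idx \<Rightarrow> 'a^idx"
  assume der: "is_derivation (lv_mult (chain_alpha r12 r23 r34 r45)) D"
  then have lin: "Vector_Spaces.linear ((*s)) ((*s)) D" unfolding is_derivation_def by auto
  have mh: "module_hom ((*s)) ((*s)) D" using lin Vector_Spaces.module_hom_iff_linear by blast
  show "D = (\<lambda>u. 0)"
  proof
    fix u :: "'a^idx"
    have u: "u = (\<Sum>i\<in>UNIV. u $ i *s ebasis i)"
      apply (simp add: vec_eq_iff sum_idx ebasis_def)
      using idx.exhaust by blast
    have "D u = (\<Sum>i\<in>UNIV. u $ i *s D (ebasis i))"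
      by (subst u) (simp add: module_hom.sum[OF mh] module_hom.scale[OF mh])
    also have "\<dots> = 0" using cols_zero[OF assms der] by simp
    finally show "D u = 0" .
  qed
next
  fix D :: "'a^idx \<Rightarrow> 'a^idx"
  assume "D = (\<lambda>u. 0)"
  then show "is_derivation (lv_mult (chain_alpha r12 r23 r34 r45)) D" using zero_der by simp
qed

end
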